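(* Let $m\geq\beta\geq 1$ be integers and let $G^*$ be a graph with maximum $q$ among all graphs in $\mathfrak{G}_{m,\geq\beta}$. Let $X^*$ be a principal eigenvector of $Q(G^* )$ with coordinates $x^*_v$, let $M^*(G^* )=\{u_1v_1,\ldots,u_{\beta(G^* )}v_{\beta(G^* )}\}$ be a matching of $G^*$ extremal to $X^*$, and let $V^*=\{u_i,v_i : i=1,\ldots,\beta(G^* )\}$. Then $x^*_w\leq \min_{v\in V^*}x^*_v$ for every vertex $w\in V(G^* )\setminus V^*$.
   Context: All graphs are finite, simple and undirected (isolated vertices allowed). $Q(G)=D(G)+A(G)$ is the signless Laplacian matrix and $q(G)$ its largest eigenvalue; a principal eigenvector of $Q(G)$ is a nonnegative unit vector $X$ with $Q(G)X=q(G)X$. $\beta(G)$ is the matching number of $G$. $\mathfrak{G}_{m,\geq\beta}$ denotes the set of graphs with exactly $m$ edges and matching number at least $\beta$. For a graph $G$ with at least one edge and a principal eigenvector $X$ (coordinates $x_v$), a matching $M^*(G)$ of $G$ is said to be extremal to $X$ if it is a maximum matching (of size $\beta(G)$) and $\sum_{uv\in M^*(G)}(x_u+x_v)^2=\max_M\sum_{uv\in M}(x_u+x_v)^2$, the maximum taken over all maximum matchings $M$ of $G$. *)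

theory Defs
  imports Complex_Main
begin

definition simple_graph :: "'a set \<Rightarrow> 'a set set \<Rightarrow> bool" where
  "simple_graph V E \<longleftrightarrow> finite V \<and> (\<forall>e\<in>E. \<exists>u v. u \<noteq> v \<and> e = {u, v} \<and> u \<in> V \<and> v \<in> V)"

definition degree :: "'a set set \<Rightarrow> 'a \<Rightarrow> nat" where
  "degree E v = card {e \<in> E. v \<in> e}"

definition adjacent :: "'a set set \<Rightarrow> 'a \<Rightarrow> 'a \<Rightarrow> bool" where
  "adjacent E u v \<longleftrightarrow> {u, v} \<in> E"

definition signless_lap :: "'a set \<Rightarrow> 'a set set \<Rightarrow> ('a \<Rightarrow> real) \<Rightarrow> 'a \<Rightarrow> real" where
  "signless_lap V E X v = real (degree E v) * X v + (\<Sum>u\<in>{u \<in> V. adjacent E v u}. X u)"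

definition is_Q_eigenvalue :: "'a set \<Rightarrow> 'a set set \<Rightarrow> real \<Rightarrow> bool" where
  "is_Q_eigenvalue V E lam \<longleftrightarrow>
     (\<exists>X. (\<exists>v\<in>V. X v \<noteq> 0) \<and> (\<forall>v\<in>V. signless_lap V E X v = lam * X v))"

definition q_index :: "'a set \<Rightarrow> 'a set set \<Rightarrow> real" where
  "q_index V E = Max {lam. is_Q_eigenvalue V E lam}"

definition principal_eigvec :: "'a set \<Rightarrow> 'a set set \<Rightarrow> ('a \<Rightarrow> real) \<Rightarrow> bool" where
  "principal_eigvec V E X \<longleftrightarrow>
     (\<forall>v\<in>V. X v \<ge> 0) \<and> (\<Sum>v\<in>V. (X v)\<^sup>2) = 1 \<and>
     (\<forall>v\<in>V. signless_lap V E X v = q_index V E * X v)"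

definition is_matching :: "'a set set \<Rightarrow> 'a set set \<Rightarrow> bool" where
  "is_matching E M \<longleftrightarrow> M \<subseteq> E \<and> (\<forall>e\<in>M. \<forall>f\<in>M. e \<noteq> f \<longrightarrow> e \<inter> f = {})"

definition matching_number :: "'a set set \<Rightarrow> nat" where
  "matching_number E = Max {card M | M. is_matching E M}"

definition is_max_matching :: "'a set set \<Rightarrow> 'a set set \<Rightarrow> bool" where
  "is_max_matching E M \<longleftrightarrow> is_matching E M \<and> card M = matching_number E"

definition matching_weight :: "('a \<Rightarrow> real) \<Rightarrow> 'a set set \<Rightarrow> real" where
  "matching_weight X M = (\<Sum>e\<in>M. (\<Sum>v\<in>e. X v)\<^sup>2)"

definition extremal_matching :: "'a set set \<Rightarrow> ('a \<Rightarrow> real) \<Rightarrow> 'a set set \<Rightarrow> bool" where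
  "extremal_matching E X M \<longleftrightarrow> is_max_matching E M \<and>
     (\<forall>M'. is_max_matching E M' \<longrightarrow> matching_weight X M' \<le> matching_weight X M)"

definition graph_class :: "nat \<Rightarrow> nat \<Rightarrow> ('a set \<times> 'a set set) set" where
  "graph_class m b = {(V, E). simple_graph V E \<and> card E = m \<and> matching_number E \<ge> b}"

end

theory Submission imports Defs "HOL-Analysis.Analysis" begin

definition bil :: "'a set set \<Rightarrow> ('a \<Rightarrow> real) \<Rightarrow> ('a \<Rightarrow> real) \<Rightarrow> real" where
  "bil E Y Z = (\<Sum>e\<in>E. (\<Sum>x\<in>e. Y x) * (\<Sum>x\<in>e. Z x))"

lemma sg_finE: "simple_graph V E \<Longrightarrow> finite E"
proof -
  assume a: "simple_graph V E"
  have "E \<subseteq> Pow V"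
  proof
    fix e assume e: "e \<in> E"
    obtain a b where ab: "a \<noteq> b" "e = {a, b}" "a \<in> V" "b \<in> V"
      using a e unfolding simple_graph_def by blast
    then show "e \<in> Pow V" by simp
  qed
  moreover have "finite V" using a unfolding simple_graph_def by blast
  ultimately show ?thesis using finite_subset by blast
qed

lemma sg_edge: "simple_graph V E \<Longrightarrow> e \<in> E \<Longrightarrow> x \<in> e \<Longrightarrow> \<exists>y. y \<noteq> x \<and> e = {x, y} \<and> x \<in> V \<and> y \<in> V"
proof -
  assume sg: "simple_graph V E" and e: "e \<in> E" and x: "x \<in> e"
  obtain a b where ab: "a \<noteq> b" "e = {a, b}" "a \<in> V" "b \<in> V"
    using sg e unfolding simple_graph_def by blast
  have "x = a \<or> x = b" using x ab(2) by simp
  then show ?thesis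
  proof
    assume "x = a" then show ?thesis using ab by (intro exI[of _ b]) auto
  next
    assume "x = b" then show ?thesis using ab by (intro exI[of _ a]) auto
  qed
qed

lemma sg_sub: "simple_graph V E \<Longrightarrow> e \<in> E \<Longrightarrow> e \<subseteq> V"
proof -
  assume sg: "simple_graph V E" and e: "e \<in> E"
  obtain a b where ab: "a \<noteq> b" "e = {a, b}" "a \<in> V" "b \<in> V"
    using sg e unfolding simple_graph_def by blast
  then show ?thesis by simp
qed

lemma sg_noloop: "simple_graph V E \<Longrightarrow> {x} \<notin> E"
proof
  assume "simple_graph V E" "{x} \<in> E"
  then obtain a b where ab: "a \<noteq> b" "{x} = {a, b}" unfolding simple_graph_def by blast
  have "a \<in> {x}" "b \<in> {x}" using ab(2) by auto
  then show False using ab(1) by simp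
qed

lemma lap_bil:
  assumes sg: "simple_graph V E"
  shows "(\<Sum>v\<in>V. Z v * signless_lap V E Y v) = bil E Y Z"
proof -
  have fV: "finite V" using sg unfolding simple_graph_def by blast
  have fE: "finite E" using sg_finE[OF sg] .
  define S where "S e = (\<Sum>x\<in>e. Y x)" for e
  have "bil E Y Z = (\<Sum>e\<in>E. \<Sum>x\<in>{x\<in>V. x \<in> e}. Z x * S e)"
    unfolding bil_def
  proof (rule sum.cong[OF refl])
    fix e assume e: "e \<in> E"
    have "{x\<in>V. x \<in> e} = e" using sg_sub[OF sg e] by blast
    then show "(\<Sum>x\<in>e. Y x) * (\<Sum>x\<in>e. Z x) = (\<Sum>x\<in>{x\<in>V. x \<in> e}. Z x * S e)"
      by (simp add: S_def sum_distrib_left sum_distrib_right mult.commute)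
  qed
  also have "\<dots> = (\<Sum>x\<in>V. \<Sum>e\<in>{e\<in>E. x \<in> e}. Z x * S e)"
    using sum.swap_restrict[OF fE fV, of "\<lambda>e x. Z x * S e" "\<lambda>e x. x \<in> e"] by simp
  also have "\<dots> = (\<Sum>v\<in>V. Z v * signless_lap V E Y v)"
  proof (rule sum.cong[OF refl])
    fix x assume xV: "x \<in> V"
    define oth where "oth e = the_elem (e - {x})" for e
    have oth: "e \<in> E \<Longrightarrow> x \<in> e \<Longrightarrow> oth e \<noteq> x \<and> e = {x, oth e} \<and> oth e \<in> V" for e
    proof -
      assume "e \<in> E" "x \<in> e"
      then obtain y where "y \<noteq> x" "e = {x, y}" "y \<in> V" using sg_edge[OF sg] by blast
      moreover then have "oth e = y" unfolding oth_def by (simp add: insert_Diff_if)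
      ultimately show ?thesis by simp
    qed
    have fEx: "finite {e\<in>E. x \<in> e}" using fE by simp
    have "(\<Sum>e\<in>{e\<in>E. x \<in> e}. S e) = (\<Sum>e\<in>{e\<in>E. x \<in> e}. Y x + Y (oth e))"
    proof (rule sum.cong[OF refl])
      fix e assume "e \<in> {e\<in>E. x \<in> e}"
      then have h1: "oth e \<noteq> x" and h2: "e = {x, oth e}" using oth by blast+
      show "S e = Y x + Y (oth e)" unfolding S_def by (subst h2) (simp add: h1 h1[symmetric])
    qed
    also have "\<dots> = real (Defs.degree E x) * Y x + (\<Sum>e\<in>{e\<in>E. x \<in> e}. Y (oth e))"
      by (simp add: sum.distrib Defs.degree_def)
    also have "(\<Sum>e\<in>{e\<in>E. x \<in> e}. Y (oth e)) = (\<Sum>u\<in>{u \<in> V. adjacent E x u}. Y u)"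
    proof (rule sum.reindex_bij_witness[where j = oth and i = "\<lambda>u. {x, u}"])
      fix u assume u: "u \<in> {u \<in> V. adjacent E x u}"
      then have ux: "u \<noteq> x" using sg_noloop[OF sg, of x] unfolding adjacent_def by auto
      have "oth {x, u} = u" unfolding oth_def using ux by (simp add: insert_Diff_if)
      then show "oth {x, u} = u" .
      show "{x, u} \<in> {e\<in>E. x \<in> e}" using u unfolding adjacent_def by auto
    next
      fix e assume e: "e \<in> {e\<in>E. x \<in> e}"
      then show "{x, oth e} = e" using oth by auto
      show "oth e \<in> {u \<in> V. adjacent E x u}" using oth e unfolding adjacent_def by auto
      show "Y (oth e) = Y (oth e)" by simp
    qed
    finally have "(\<Sum>e\<in>{e\<in>E. x \<in> e}. S e) = signless_lap V E Y x"
      unfolding signless_lap_def by simp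
    then show "(\<Sum>e\<in>{e\<in>E. x \<in> e}. Z x * S e) = Z x * signless_lap V E Y x"
      by (simp add: sum_distrib_left[symmetric])
  qed
  finally show ?thesis by simp
qed


lemma sum_delta_l: "finite V \<Longrightarrow> v \<in> V \<Longrightarrow> (\<Sum>w\<in>V. (if w = v then 1 else 0) * f w) = (f v :: real)"
proof -
  assume "finite V" "v \<in> V"
  have "(\<Sum>w\<in>V. (if w = v then 1 else 0) * f w) = (\<Sum>w\<in>V. if w = v then f w else 0)"
    by (rule sum.cong) auto
  also have "\<dots> = f v" using \<open>finite V\<close> \<open>v \<in> V\<close> by (simp add: sum.delta')
  finally show ?thesis .
qed

lemma sum_delta_r: "finite V \<Longrightarrow> v \<in> V \<Longrightarrow> (\<Sum>w\<in>V. f w * (if w = v then 1 else 0)) = (f v :: real)"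
  using sum_delta_l[of V v f] by (simp add: mult.commute)

lemma bil_sym: "bil E Y Z = bil E Z Y"
  by (simp add: bil_def mult.commute)

lemma bil_expand: "bil E (\<lambda>x. Y x + t * Z x) (\<lambda>x. Y x + t * Z x) = bil E Y Y + 2*t*bil E Y Z + t^2 * bil E Z Z"
  by (simp add: bil_def sum.distrib sum_distrib_left sum_distrib_right power2_eq_square algebra_simps)

lemma bil_scale: "bil E (\<lambda>x. c * Y x) (\<lambda>x. c * Y x) = c^2 * bil E Y Y"
  by (simp add: bil_def sum_distrib_left power2_eq_square algebra_simps)

lemma bil_cong: "simple_graph V E \<Longrightarrow> (\<forall>v\<in>V. Y v = Y' v) \<Longrightarrow> (\<forall>v\<in>V. Z v = Z' v) \<Longrightarrow> bil E Y Z = bil E Y' Z'"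
  unfolding bil_def
  by (intro sum.cong refl arg_cong2[where f="(*)"]) (auto dest!: sg_sub)

lemma bil_zero: "bil E (\<lambda>_. 0) (\<lambda>_. 0) = 0"
  by (simp add: bil_def)

lemma lap_scale: "signless_lap V E (\<lambda>x. c * Y x) v = c * signless_lap V E Y v"
  by (simp add: signless_lap_def sum_distrib_left algebra_simps)

lemma unit_eigvec:
  assumes "is_Q_eigenvalue V E lam" "finite V"
  shows "\<exists>Y. (\<Sum>v\<in>V. (Y v)^2) = 1 \<and> (\<forall>v\<in>V. signless_lap V E Y v = lam * Y v)"
proof -
  obtain Y where Y: "\<exists>v\<in>V. Y v \<noteq> 0" "\<forall>v\<in>V. signless_lap V E Y v = lam * Y v"
    using assms unfolding is_Q_eigenvalue_def by blast
  define n where "n = (\<Sum>v\<in>V. (Y v)^2)"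
  have "n > 0" unfolding n_def using Y(1) assms(2)
    by (metis (no_types, lifting) power_zero_numeral sum_pos2 zero_less_power2 zero_le_power2)
  define c where "c = 1 / sqrt n"
  have "(\<Sum>v\<in>V. (c * Y v)^2) = c^2 * n" unfolding n_def by (simp add: power_mult_distrib sum_distrib_left)
  also have "\<dots> = 1" unfolding c_def using \<open>n > 0\<close> by (simp add: power_divide)
  finally have 1: "(\<Sum>v\<in>V. (c * Y v)^2) = 1" .
  have 2: "\<forall>v\<in>V. signless_lap V E (\<lambda>x. c * Y x) v = lam * (c * Y v)"
    using Y(2) by (simp add: lap_scale)
  show ?thesis using 1 2 by (intro exI[of _ "\<lambda>x. c * Y x"]) simp
qed

lemma eig_card:
  assumes sg: "simple_graph V E" and fL: "finite L" and LE: "L \<subseteq> {lam. is_Q_eigenvalue V E lam}"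
  shows "card L \<le> card V"
proof -
  have fV: "finite V" using sg unfolding simple_graph_def by blast
  have "\<forall>lam\<in>L. \<exists>Y. (\<Sum>v\<in>V. (Y v)^2) = 1 \<and> (\<forall>v\<in>V. signless_lap V E Y v = lam * Y v)"
    using LE unit_eigvec[OF _ fV] by blast
  then obtain ev where ev: "\<And>lam. lam \<in> L \<Longrightarrow> (\<Sum>v\<in>V. (ev lam v)^2) = 1"
     "\<And>lam v. lam \<in> L \<Longrightarrow> v \<in> V \<Longrightarrow> signless_lap V E (ev lam) v = lam * ev lam v"
    by metis
  have inner: "(\<Sum>w\<in>V. ev a w * ev b w) = (if a = b then 1 else 0)" if ab: "a \<in> L" "b \<in> L" for a b
  proof (cases "a = b")
    case True
    then show ?thesis using ev(1)[OF ab(1)] by (simp add: power2_eq_square)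
  next
    case False
    define s where "s = (\<Sum>w\<in>V. ev a w * ev b w)"
    have "a * s = (\<Sum>w\<in>V. ev b w * signless_lap V E (ev a) w)"
      unfolding s_def sum_distrib_left by (rule sum.cong) (auto simp: ev(2)[OF ab(1)])
    also have "\<dots> = bil E (ev a) (ev b)" by (rule lap_bil[OF sg])
    also have "\<dots> = bil E (ev b) (ev a)" by (rule bil_sym)
    also have "\<dots> = (\<Sum>w\<in>V. ev a w * signless_lap V E (ev b) w)" by (rule lap_bil[OF sg, symmetric])
    also have "\<dots> = b * s"
      unfolding s_def sum_distrib_left by (rule sum.cong) (auto simp: ev(2)[OF ab(2)])
    finally have "(a - b) * s = 0" by (simp add: algebra_simps)
    then show ?thesis using False s_def by simp
  qed
  have bessel: "(\<Sum>a\<in>L. (ev a v)^2) \<le> 1" if vV: "v \<in> V" for v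
  proof -
    define c where "c a = ev a v" for a
    define P where "P w = (\<Sum>a\<in>L. c a * ev a w)" for w
    define s where "s = (\<Sum>a\<in>L. (c a)^2)"
    define d where "d w = (if w = v then 1 else (0::real))" for w
    have PP: "(\<Sum>w\<in>V. P w * P w) = s"
    proof -
      have "(\<Sum>w\<in>V. P w * P w) = (\<Sum>w\<in>V. \<Sum>a\<in>L. \<Sum>b\<in>L. (c a * c b) * (ev a w * ev b w))"
        unfolding P_def sum_product by (simp add: algebra_simps)
      also have "\<dots> = (\<Sum>a\<in>L. \<Sum>b\<in>L. \<Sum>w\<in>V. (c a * c b) * (ev a w * ev b w))"
        by (simp add: sum.swap[of _ V] sum.swap[of _ V L])
      also have "\<dots> = (\<Sum>a\<in>L. \<Sum>b\<in>L. (c a * c b) * (if a = b then 1 else 0))"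
        by (simp add: sum_distrib_left[symmetric] inner)
      also have "\<dots> = s" unfolding s_def
      proof (rule sum.cong[OF refl])
        fix a assume a: "a \<in> L"
        have "(\<Sum>b\<in>L. (c a * c b) * (if a = b then 1 else 0)) = (\<Sum>b\<in>L. if a = b then c a * c b else 0)"
          by (rule sum.cong) auto
        also have "\<dots> = (c a)^2" using a fL by (simp add: power2_eq_square)
        finally show "(\<Sum>b\<in>L. (c a * c b) * (if a = b then 1 else 0)) = (c a)^2" .
      qed
      finally show ?thesis .
    qed
    have dP: "(\<Sum>w\<in>V. d w * P w) = s"
    proof -
      have "(\<Sum>w\<in>V. d w * P w) = P v" unfolding d_def by (rule sum_delta_l[OF fV vV])
      also have "\<dots> = s" unfolding P_def s_def c_def by (simp add: power2_eq_square)
      finally show ?thesis .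
    qed
    have dd: "(\<Sum>w\<in>V. d w * d w) = 1" unfolding d_def using sum_delta_l[OF fV vV, of "\<lambda>w. if w = v then 1 else 0"] by simp
    have "0 \<le> (\<Sum>w\<in>V. (d w - P w)^2)" by (simp add: sum_nonneg)
    also have "\<dots> = (\<Sum>w\<in>V. d w * d w) - 2 * (\<Sum>w\<in>V. d w * P w) + (\<Sum>w\<in>V. P w * P w)"
      by (simp add: power2_eq_square algebra_simps sum.distrib sum_subtractf sum_distrib_left)
    finally have "s \<le> 1" using PP dP dd by simp
    then show ?thesis unfolding s_def c_def .
  qed
  have "real (card L) = (\<Sum>a\<in>L. \<Sum>v\<in>V. (ev a v)^2)" using ev(1) by simp
  also have "\<dots> = (\<Sum>v\<in>V. \<Sum>a\<in>L. (ev a v)^2)" by (rule sum.swap)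
  also have "\<dots> \<le> (\<Sum>v\<in>V. 1)" by (rule sum_mono) (rule bessel)
  also have "\<dots> = real (card V)" by simp
  finally show ?thesis by simp
qed

lemma eig_finite:
  assumes sg: "simple_graph V E"
  shows "finite {lam. is_Q_eigenvalue V E lam}"
proof (rule ccontr)
  assume "infinite {lam. is_Q_eigenvalue V E lam}"
  then obtain L where "finite L" "card L = Suc (card V)" "L \<subseteq> {lam. is_Q_eigenvalue V E lam}"
    using infinite_arbitrarily_large by blast
  then show False using eig_card[OF sg] by fastforce
qed


lemma quad_zero:
  fixes b c :: real
  assumes h: "\<And>t. 2*t*b + t^2*c \<le> 0"
  shows "b = 0"
proof (rule ccontr)
  assume b: "b \<noteq> 0"
  define k where "k = \<bar>c\<bar> + 1"
  have k: "k > 0" unfolding k_def by simp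
  have "2*(b/k)*b + (b/k)^2*c \<le> 0" by (rule h)
  then have "(2*(b/k)*b + (b/k)^2*c) * k^2 \<le> 0" using k by (simp add: mult_nonpos_nonneg)
  moreover have "(2*(b/k)*b + (b/k)^2*c) * k^2 = b^2 * (2*k + c)" using k
    by (simp add: field_simps power2_eq_square)
  moreover have "2*k + c > 0"
  proof -
    have "- c \<le> \<bar>c\<bar>" "0 \<le> \<bar>c\<bar>" by simp_all
    then show ?thesis unfolding k_def by (simp add: algebra_simps)
  qed
  moreover have "b^2 > 0" using b by simp
  ultimately show False by (metis mult_pos_pos not_le)
qed

lemma eig_ge:
  assumes sg: "simple_graph V E" and unit: "(\<Sum>v\<in>V. (X v)^2) = 1"
  shows "\<exists>mu. is_Q_eigenvalue V E mu \<and> bil E X X \<le> mu"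
proof -
  have fV: "finite V" using sg unfolding simple_graph_def by blast
  define S where "S v = (if v \<in> V then {-1..1} else {0::real})" for v
  define K where "K = Pi UNIV S \<inter> {Y. (\<Sum>v\<in>V. (Y v)^2) = 1}"
  have cS: "compact (Pi UNIV S)"
  proof -
    have "compactin (product_topology (\<lambda>i. euclidean) UNIV) (PiE UNIV S)"
      by (subst compactin_PiE) (auto simp: S_def)
    then show ?thesis by (simp add: euclidean_product_topology PiE_UNIV_domain)
  qed
  have ccoord: "continuous_on A (\<lambda>Y::'a \<Rightarrow> real. Y v)" for A v
    by (rule continuous_on_subset[OF continuous_on_product_coordinates]) simp
  have cl: "closed {Y::'a\<Rightarrow>real. (\<Sum>v\<in>V. (Y v)^2) = 1}"
    by (intro closed_Collect_eq continuous_intros ccoord)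
  have cK: "compact K" unfolding K_def using cS cl by (rule compact_Int_closed)
  have inK: "(\<lambda>x. if x \<in> V then Z x else 0) \<in> K" if Z: "(\<Sum>v\<in>V. (Z v)^2) = 1" for Z
  proof -
    have "\<bar>Z v\<bar> \<le> 1" if v: "v \<in> V" for v
    proof -
      have "(Z v)^2 \<le> (\<Sum>v\<in>V. (Z v)^2)" using v fV by (intro member_le_sum) auto
      then have "(Z v)^2 \<le> 1^2" using Z by simp
      then show ?thesis using abs_le_square_iff[of "Z v" 1] by simp
    qed
    then show ?thesis unfolding K_def S_def using Z by (auto simp: abs_le_iff)
  qed
  have X0: "(\<lambda>x. if x \<in> V then X x else 0) \<in> K" using inK[OF unit] .
  have cont: "continuous_on K (\<lambda>Y. bil E Y Y)"
    unfolding bil_def by (intro continuous_intros ccoord)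
  obtain Y where YK: "Y \<in> K" and Ymax: "\<And>Z. Z \<in> K \<Longrightarrow> bil E Z Z \<le> bil E Y Y"
    using continuous_attains_sup[OF cK _ cont] X0 by blast
  define mu where "mu = bil E Y Y"
  have Yunit: "(\<Sum>v\<in>V. (Y v)^2) = 1" using YK unfolding K_def by auto
  have ge: "bil E X X \<le> mu"
  proof -
    have "bil E X X = bil E (\<lambda>x. if x \<in> V then X x else 0) (\<lambda>x. if x \<in> V then X x else 0)"
      by (rule bil_cong[OF sg]) auto
    also have "\<dots> \<le> mu" unfolding mu_def by (rule Ymax[OF X0])
    finally show ?thesis .
  qed
  have Wle: "bil E W W \<le> mu * (\<Sum>v\<in>V. (W v)^2)" for W
  proof (cases "(\<Sum>v\<in>V. (W v)^2) = 0")
    case True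
    then have "\<forall>v\<in>V. W v = 0" using fV by (simp add: sum_nonneg_eq_0_iff)
    then have "bil E W W = bil E (\<lambda>_. 0) (\<lambda>_. 0)" by (intro bil_cong[OF sg]) auto
    then show ?thesis using True by (simp add: bil_zero)
  next
    case False
    define n where "n = (\<Sum>v\<in>V. (W v)^2)"
    have n: "n > 0" using False unfolding n_def by (simp add: order_le_neq_trans sum_nonneg)
    define c where "c = 1 / sqrt n"
    have c2: "c^2 * n = 1" unfolding c_def using n by (simp add: power_divide)
    have "(\<Sum>v\<in>V. (c * W v)^2) = c^2 * n" unfolding n_def by (simp add: power_mult_distrib sum_distrib_left)
    then have "(\<lambda>x. if x \<in> V then c * W x else 0) \<in> K" using inK c2 by simp
    then have "bil E (\<lambda>x. if x \<in> V then c * W x else 0) (\<lambda>x. if x \<in> V then c * W x else 0) \<le> mu"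
      unfolding mu_def by (rule Ymax)
    moreover have "bil E (\<lambda>x. if x \<in> V then c * W x else 0) (\<lambda>x. if x \<in> V then c * W x else 0)
       = bil E (\<lambda>x. c * W x) (\<lambda>x. c * W x)" by (rule bil_cong[OF sg]) auto
    ultimately have "c^2 * bil E W W \<le> mu" by (simp add: bil_scale)
    then have "c^2 * bil E W W * n \<le> mu * n" using n by (simp add: mult_right_mono)
    moreover have "c^2 * bil E W W * n = bil E W W * (c^2 * n)" by (simp add: algebra_simps)
    ultimately show ?thesis using c2 unfolding n_def[symmetric] by simp
  qed
  have eig: "signless_lap V E Y v = mu * Y v" if vV: "v \<in> V" for v
  proof -
    define Z where "Z x = (if x = v then 1 else (0::real))" for x
    have YZ: "(\<Sum>x\<in>V. Y x * Z x) = Y v" unfolding Z_def by (rule sum_delta_r[OF fV vV])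
    have ZZ: "(\<Sum>x\<in>V. (Z x)^2) = 1" unfolding Z_def power2_eq_square using sum_delta_l[OF fV vV, of "\<lambda>w. if w = v then 1 else 0"] by simp
    have bZ: "bil E Y Z = signless_lap V E Y v"
    proof -
      have "bil E Y Z = (\<Sum>x\<in>V. Z x * signless_lap V E Y x)" by (rule lap_bil[OF sg, symmetric])
      also have "\<dots> = signless_lap V E Y v" unfolding Z_def by (rule sum_delta_l[OF fV vV])
      finally show ?thesis .
    qed
    have "2*t*(bil E Y Z - mu * Y v) + t^2*(bil E Z Z - mu) \<le> 0" for t
    proof -
      have "bil E (\<lambda>x. Y x + t * Z x) (\<lambda>x. Y x + t * Z x) \<le> mu * (\<Sum>x\<in>V. (Y x + t * Z x)^2)"
        by (rule Wle)
      moreover have "(\<Sum>x\<in>V. (Y x + t * Z x)^2) = (\<Sum>x\<in>V. (Y x)^2) + 2*t*(\<Sum>x\<in>V. Y x * Z x) + t^2 * (\<Sum>x\<in>V. (Z x)^2)"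
        by (simp add: power2_eq_square algebra_simps sum.distrib sum_distrib_left)
      ultimately show ?thesis using YZ ZZ Yunit unfolding bil_expand mu_def by (simp add: algebra_simps)
    qed
    then have "bil E Y Z - mu * Y v = 0" by (rule quad_zero)
    then show ?thesis using bZ by simp
  qed
  have "\<exists>v\<in>V. Y v \<noteq> 0"
  proof (rule ccontr)
    assume "\<not> (\<exists>v\<in>V. Y v \<noteq> 0)"
    then have "(\<Sum>v\<in>V. (Y v)^2) = 0" by simp
    then show False using Yunit by simp
  qed
  then have "is_Q_eigenvalue V E mu" unfolding is_Q_eigenvalue_def using eig by blast
  then show ?thesis using ge by blast
qed


lemma bil_swap:
  assumes "finite F" "a \<in> F" "c \<notin> F"
  shows "bil (insert c (F - {a})) X X = bil F X X - (\<Sum>x\<in>a. X x)^2 + (\<Sum>x\<in>c. X x)^2"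
proof -
  have "bil (insert c (F - {a})) X X = (\<Sum>x\<in>c. X x)^2 + bil (F - {a}) X X"
    using assms unfolding bil_def by (simp add: power2_eq_square)
  moreover have "bil F X X = (\<Sum>x\<in>a. X x)^2 + bil (F - {a}) X X"
    using assms unfolding bil_def by (simp add: power2_eq_square sum.remove)
  ultimately show ?thesis by simp
qed

lemma mw_bil: "matching_weight X M = bil M X X"
  by (simp add: matching_weight_def bil_def power2_eq_square)

lemma card_le_mn: "finite E \<Longrightarrow> is_matching E M \<Longrightarrow> card M \<le> matching_number E"
  unfolding matching_number_def
proof (rule Max_ge)
  assume "finite E"
  then show "finite {card M |M. is_matching E M}"
    by (rule finite_subset[rotated, OF finite_imageI[OF finite_Pow_iff[THEN iffD2]]])
       (auto simp: is_matching_def)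
qed auto

theorem lemma2p2:
  fixes m b :: nat and V :: "'a set" and E :: "'a set set"
    and X :: "'a \<Rightarrow> real" and M :: "'a set set"
  assumes "infinite (UNIV :: 'a set)"
    and "1 \<le> b" and "b \<le> m"
    and "(V, E) \<in> graph_class m b"
    and "\<forall>(V' :: 'a set, E') \<in> graph_class m b. q_index V' E' \<le> q_index V E"
    and "principal_eigvec V E X"
    and "extremal_matching E X M"
  shows "\<forall>w \<in> V - \<Union>M. \<forall>v \<in> \<Union>M. X w \<le> X v"
proof (intro ballI, rule ccontr)
  fix w v assume wV: "w \<in> V - \<Union>M" and vM: "v \<in> \<Union>M" and lt: "\<not> X w \<le> X v"
  have sg: "simple_graph V E" and cE: "card E = m" and mnE: "matching_number E \<ge> b"
    using assms(4) unfolding graph_class_def by auto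
  have fE: "finite E" using sg_finE[OF sg] .
  have fV: "finite V" using sg unfolding simple_graph_def by blast
  have Xnn: "\<And>x. x \<in> V \<Longrightarrow> X x \<ge> 0" and Xu: "(\<Sum>v\<in>V. (X v)^2) = 1"
    and Xe: "\<And>x. x \<in> V \<Longrightarrow> signless_lap V E X x = q_index V E * X x"
    using assms(6) unfolding principal_eigvec_def by auto
  have qX: "bil E X X = q_index V E"
  proof -
    have "bil E X X = (\<Sum>x\<in>V. X x * signless_lap V E X x)" by (rule lap_bil[OF sg, symmetric])
    also have "\<dots> = (\<Sum>x\<in>V. q_index V E * (X x)^2)" by (rule sum.cong) (auto simp: Xe power2_eq_square)
    also have "\<dots> = q_index V E" by (simp add: sum_distrib_left[symmetric] Xu)
    finally show ?thesis .
  qed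
  have Mm: "is_matching E M" and cM: "card M = matching_number E"
    and Mext: "\<And>M'. is_max_matching E M' \<Longrightarrow> matching_weight X M' \<le> matching_weight X M"
    using assms(7) unfolding extremal_matching_def is_max_matching_def by auto
  have ME: "M \<subseteq> E" and Mdisj: "\<And>f g. f \<in> M \<Longrightarrow> g \<in> M \<Longrightarrow> f \<noteq> g \<Longrightarrow> f \<inter> g = {}"
    using Mm unfolding is_matching_def by auto
  have fM: "finite M" using ME fE finite_subset by blast
  obtain e where eM: "e \<in> M" and ve: "v \<in> e" using vM by blast
  obtain u where uv: "u \<noteq> v" and e: "e = {v, u}" and vV: "v \<in> V" and uV: "u \<in> V"
    using sg_edge[OF sg _ ve] eM ME by blast
  have w: "w \<in> V" "w \<notin> \<Union>M" using wV by auto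
  have uw: "u \<noteq> w" using w eM e by auto
  define c where "c = {u, w}"
  have cM: "c \<notin> M" using w uw c_def by auto
  define M' where "M' = insert c (M - {e})"
  have disj': "\<forall>f\<in>M'. \<forall>g\<in>M'. f \<noteq> g \<longrightarrow> f \<inter> g = {}"
  proof -
    have "f \<inter> c = {}" if f: "f \<in> M - {e}" for f
    proof -
      have "f \<inter> e = {}" using f Mdisj eM by auto
      then have "u \<notin> f" using e by auto
      moreover have "w \<notin> f" using w f by auto
      ultimately show ?thesis unfolding c_def by auto
    qed
    then show ?thesis unfolding M'_def using Mdisj by blast
  qed
  have cardM': "card M' = card M"
  proof -
    have "c \<notin> M - {e}" using cM by blast
    then have "card M' = Suc (card (M - {e}))" unfolding M'_def using fM by simp
    moreover have "card (M - {e}) = card M - 1" using eM fM by simp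
    moreover have "card M > 0" using fM eM by (auto simp: card_gt_0_iff)
    ultimately show ?thesis by simp
  qed
  have sc: "(\<Sum>x\<in>c. X x) = X u + X w" unfolding c_def using uw by simp
  have se: "(\<Sum>x\<in>e. X x) = X u + X v" unfolding e using uv by simp
  have gain: "(X u + X v)^2 < (X u + X w)^2"
    using Xnn[OF uV] Xnn[OF vV] lt by (intro power_strict_mono) auto
  show False
  proof (cases "c \<in> E")
    case True
    have "M' \<subseteq> E" unfolding M'_def using True ME by blast
    then have "is_max_matching E M'"
      unfolding is_max_matching_def is_matching_def using disj' cardM' \<open>card M = matching_number E\<close>
      by (intro conjI) simp_all
    then have "matching_weight X M' \<le> matching_weight X M" by (rule Mext)
    moreover have "matching_weight X M' = matching_weight X M - (X u + X v)^2 + (X u + X w)^2"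
      unfolding mw_bil M'_def using bil_swap[OF fM eM cM] se sc by simp
    ultimately show False using gain by simp
  next
    case False
    define E' where "E' = insert c (E - {e})"
    have eE: "e \<in> E" using eM ME by blast
    have h: "\<forall>f\<in>E. \<exists>a b. a \<noteq> b \<and> f = {a, b} \<and> a \<in> V \<and> b \<in> V"
      using sg unfolding simple_graph_def by (elim conjE)
    have h2: "\<forall>f\<in>E'. \<exists>a b. a \<noteq> b \<and> f = {a, b} \<and> a \<in> V \<and> b \<in> V"
    proof
      fix f assume f: "f \<in> E'"
      show "\<exists>a b. a \<noteq> b \<and> f = {a, b} \<and> a \<in> V \<and> b \<in> V"
      proof (cases "f = c")
        case True
        then show ?thesis unfolding c_def using uw uV w(1) by blast
      next
        case False
        then have "f \<in> E" using f unfolding E'_def by blast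
        then show ?thesis using h by blast
      qed
    qed
    have sg': "simple_graph V E'"
      unfolding simple_graph_def using fV h2 by (intro conjI)
    have cE': "card E' = m"
    proof -
      have "c \<notin> E - {e}" using False by blast
      then have "card E' = Suc (card (E - {e}))" unfolding E'_def using fE by simp
      moreover have "card (E - {e}) = card E - 1" using eE fE by simp
      moreover have "card E > 0" using fE eE by (auto simp: card_gt_0_iff)
      ultimately show ?thesis using cE by simp
    qed
    have "M' \<subseteq> E'" unfolding M'_def E'_def using ME by blast
    then have "is_matching E' M'" unfolding is_matching_def using disj' by (intro conjI)
    then have "card M' \<le> matching_number E'" using card_le_mn sg_finE[OF sg'] by blast
    then have "(V, E') \<in> graph_class m b" using sg' cE' cardM' mnE \<open>card M = matching_number E\<close>
      unfolding graph_class_def by auto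
    then have qle: "q_index V E' \<le> q_index V E" using assms(5) by blast
    obtain mu where mu: "is_Q_eigenvalue V E' mu" "bil E' X X \<le> mu" using eig_ge[OF sg' Xu] by blast
    have "mu \<le> q_index V E'" unfolding q_index_def using mu(1) eig_finite[OF sg'] by (intro Max_ge) auto
    moreover have "bil E' X X = bil E X X - (X u + X v)^2 + (X u + X w)^2"
      unfolding E'_def using bil_swap[OF fE eE False] se sc by simp
    ultimately show False using mu(2) qle qX gain by linarith
  qed
qed

end
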